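(* Let $\mathcal{C}$ be a translation based cipher over $V=(\mathbb{F}_2)^{mn}$ with a strongly proper round $h$, and suppose that for some integer $r$ every brick of the bricklayer transformation $\gamma_h$ satisfies either (A) $1<r<m$, the brick is differentially $2^r$-uniform and strongly $(r-1)$-anti-invariant; or (B) $1\le r<m$, the brick is weakly $2^r$-uniform and strongly $r$-anti-invariant (with the same alternative (A) or (B) for all bricks). Then $\Gamma_h(\mathcal{C})$ is primitive and is not a wreath product; that is, writing $mn=d$, it is not the case that $\Gamma_h(\mathcal{C})=(S_1\times\dots\times S_c).O.P$ with $T(V)=T_1\times\dots\times T_c$, where $c>1$ divides $d$, each $T_i$ is an abelian subgroup of $S_i$ of order $2^{d/c}$, each $S_i\cong\mathrm{Alt}(2^{d/c})$ or $\mathrm{Sym}(2^{d/c})$, the $S_i$ are all conjugate, $O\le\mathrm{Out}(S_1)\times\dots\times\mathrm{Out}(S_c)$, and $P$ permutes the $S_i$ transitively.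
   Context: Permutations act on the right. Let $m,n>1$ and $V=V_1\oplus\dots\oplus V_n$ with each $V_i\cong(\mathbb{F}_2)^m$. $\sigma_v:x\mapsto x+v$, $T(V)=\{\sigma_v:v\in V\}$. A bricklayer transformation is a permutation $\gamma$ of $V$ with permutations ("bricks") $\gamma_i$ of $V_i$ such that $(v_1+\dots+v_n)\gamma=v_1\gamma_1+\dots+v_n\gamma_n$. A wall is a nontrivial proper subspace of $V$ that is a sum of some $V_i$; $\lambda\in\mathrm{GL}(V)$ is a proper mixing layer if no wall is $\lambda$-invariant, and strongly proper if there are no walls $W,W'$ with $W\lambda=W'$. A tb cipher $\mathcal{C}=\{\tau_k:k\in\mathcal{K}\}$ has $\tau_k=\tau_{k,1}\cdots\tau_{k,l}$ with $\tau_{k,h}=\gamma_h\lambda_h\sigma_{\phi(k,h)}$, $\gamma_h$ a key-independent bricklayer transformation with $0\gamma_h=0$, $\lambda_h\in\mathrm{GL}(V)$ key-independent, $\phi:\mathcal{K}\times\{1,\dots,l\}\to V$; a round $h$ is proper if $\lambda_h$ is a proper mixing layer and $k\mapsto\phi(k,h)$ is onto $V$ (a tb cipher has at least one proper round), and strongly proper if moreover $\lambda_h$ is strongly proper. $\Gamma_h(\mathcal{C})=\langle\tau_{k,h}:k\in\mathcal{K}\rangle$. For $f:(\mathbb{F}_2)^m\to(\mathbb{F}_2)^m$, $\hat f_u(x)=f(x+u)+f(x)$. $f$ is differentially $\delta$-uniform if $|\{x:\hat f_u(x)=v\}|\le\delta$ for all $u\ne0$, all $v$; weakly $\delta$-uniform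 if $|\mathrm{Im}(\hat f_u)|>2^{m-1}/\delta$ for all $u\ne0$. For $1\le s<m$, $f$ is strongly $s$-anti-invariant if for any subspaces $U,W$ with $f(U)=W$, either $\dim U=\dim W<m-s$ or $U=W=(\mathbb{F}_2)^m$. The notation $G=(S_1\times\dots\times S_c).O.P$ means $S_1\times\dots\times S_c$ is normal in $G$ and the quotient is an extension of $O$ by $P$. *)

theory Defs
  imports Complex_Main "HOL-Library.Cardinality" "HOL-Algebra.Algebra"
begin

text \<open>A vector of (F_2)^A is a function A => bool; addition is pointwise xor.
  The brick space V_i = (F_2)^m is modelled as 'm => bool (m = CARD('m)),
  and V = V_1 + ... + V_n as ('n \<times> 'm) => bool (n = CARD('n)), the i-th brick
  of v being (\<lambda>j. v (i,j)).\<close>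

definition vadd :: "('a \<Rightarrow> bool) \<Rightarrow> ('a \<Rightarrow> bool) \<Rightarrow> ('a \<Rightarrow> bool)" where
  "vadd x y = (\<lambda>a. x a \<noteq> y a)"

definition vzero :: "'a \<Rightarrow> bool" where
  "vzero = (\<lambda>_. False)"

text \<open>F_2-subspaces (scalar multiplication over F_2 is trivial).\<close>
definition f2_subspace :: "('a \<Rightarrow> bool) set \<Rightarrow> bool" where
  "f2_subspace U \<longleftrightarrow> vzero \<in> U \<and> (\<forall>x\<in>U. \<forall>y\<in>U. vadd x y \<in> U)"

definition f2_dim :: "('a \<Rightarrow> bool) set \<Rightarrow> nat" where
  "f2_dim U = (THE k. card U = 2 ^ k)"

definition f2_linear :: "(('a \<Rightarrow> bool) \<Rightarrow> ('b \<Rightarrow> bool)) \<Rightarrow> bool" where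
  "f2_linear f \<longleftrightarrow> (\<forall>x y. f (vadd x y) = vadd (f x) (f y))"

definition in_GL :: "(('a \<Rightarrow> bool) \<Rightarrow> ('a \<Rightarrow> bool)) \<Rightarrow> bool" where
  "in_GL f \<longleftrightarrow> bij f \<and> f2_linear f"

definition transl :: "('a \<Rightarrow> bool) \<Rightarrow> ('a \<Rightarrow> bool) \<Rightarrow> ('a \<Rightarrow> bool)" where
  "transl v = (\<lambda>x. vadd x v)"

definition transl_group :: "(('a \<Rightarrow> bool) \<Rightarrow> ('a \<Rightarrow> bool)) set" where
  "transl_group = range transl"

definition bricklayer ::
  "('n \<Rightarrow> ('m \<Rightarrow> bool) \<Rightarrow> ('m \<Rightarrow> bool)) \<Rightarrow> (('n \<times> 'm) \<Rightarrow> bool) \<Rightarrow> (('n \<times> 'm) \<Rightarrow> bool)" where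
  "bricklayer g v = (\<lambda>(i, j). g i (\<lambda>j'. v (i, j')) j)"

definition brick_sum :: "'n set \<Rightarrow> (('n \<times> 'm) \<Rightarrow> bool) set" where
  "brick_sum I = {v. \<forall>i j. i \<notin> I \<longrightarrow> \<not> v (i, j)}"

definition wall :: "(('n \<times> 'm) \<Rightarrow> bool) set \<Rightarrow> bool" where
  "wall W \<longleftrightarrow> (\<exists>I. I \<noteq> {} \<and> I \<noteq> UNIV \<and> W = brick_sum I)"

definition proper_mixing :: "((('n \<times> 'm) \<Rightarrow> bool) \<Rightarrow> (('n \<times> 'm) \<Rightarrow> bool)) \<Rightarrow> bool" where
  "proper_mixing lam \<longleftrightarrow> in_GL lam \<and> (\<forall>W. wall W \<longrightarrow> lam ` W \<noteq> W)"

definition strongly_proper_mixing :: "((('n \<times> 'm) \<Rightarrow> bool) \<Rightarrow> (('n \<times> 'm) \<Rightarrow> bool)) \<Rightarrow> bool" where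
  "strongly_proper_mixing lam \<longleftrightarrow> in_GL lam \<and> \<not> (\<exists>W W'. wall W \<and> wall W' \<and> lam ` W = W')"

text \<open>Round function tau_{k,h} = gamma_h lambda_h sigma_{phi(k,h)}, permutations acting on the
  right, i.e. first gamma_h, then lambda_h, then the translation.\<close>
definition round_fun ::
  "('n \<Rightarrow> ('m \<Rightarrow> bool) \<Rightarrow> ('m \<Rightarrow> bool)) \<Rightarrow> ((('n \<times> 'm) \<Rightarrow> bool) \<Rightarrow> (('n \<times> 'm) \<Rightarrow> bool))
    \<Rightarrow> (('n \<times> 'm) \<Rightarrow> bool) \<Rightarrow> (('n \<times> 'm) \<Rightarrow> bool) \<Rightarrow> (('n \<times> 'm) \<Rightarrow> bool)" where
  "round_fun g lam k_h = transl k_h \<circ> lam \<circ> bricklayer g"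

definition proper_round ::
  "(nat \<Rightarrow> ((('n \<times> 'm) \<Rightarrow> bool) \<Rightarrow> (('n \<times> 'm) \<Rightarrow> bool))) \<Rightarrow> ('k \<Rightarrow> nat \<Rightarrow> (('n \<times> 'm) \<Rightarrow> bool))
     \<Rightarrow> nat \<Rightarrow> bool" where
  "proper_round lam phi h \<longleftrightarrow> proper_mixing (lam h) \<and> surj (\<lambda>k. phi k h)"

definition strongly_proper_round ::
  "(nat \<Rightarrow> ((('n \<times> 'm) \<Rightarrow> bool) \<Rightarrow> (('n \<times> 'm) \<Rightarrow> bool))) \<Rightarrow> ('k \<Rightarrow> nat \<Rightarrow> (('n \<times> 'm) \<Rightarrow> bool))
     \<Rightarrow> nat \<Rightarrow> bool" where
  "strongly_proper_round lam phi h \<longleftrightarrow> proper_round lam phi h \<and> strongly_proper_mixing (lam h)"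

definition tb_cipher ::
  "nat \<Rightarrow> (nat \<Rightarrow> 'n \<Rightarrow> ('m \<Rightarrow> bool) \<Rightarrow> ('m \<Rightarrow> bool))
     \<Rightarrow> (nat \<Rightarrow> ((('n \<times> 'm) \<Rightarrow> bool) \<Rightarrow> (('n \<times> 'm) \<Rightarrow> bool)))
     \<Rightarrow> ('k \<Rightarrow> nat \<Rightarrow> (('n \<times> 'm) \<Rightarrow> bool)) \<Rightarrow> bool" where
  "tb_cipher l g lam phi \<longleftrightarrow>
     (\<forall>h\<in>{1..l}. (\<forall>i. bij (g h i)) \<and> bricklayer (g h) vzero = vzero \<and> in_GL (lam h))
     \<and> (\<exists>h\<in>{1..l}. proper_round lam phi h)"

abbreviation SymV :: "('a \<Rightarrow> 'a) monoid" where
  "SymV \<equiv> BijGroup UNIV"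

definition Gamma_h ::
  "(nat \<Rightarrow> 'n \<Rightarrow> ('m \<Rightarrow> bool) \<Rightarrow> ('m \<Rightarrow> bool))
     \<Rightarrow> (nat \<Rightarrow> ((('n \<times> 'm) \<Rightarrow> bool) \<Rightarrow> (('n \<times> 'm) \<Rightarrow> bool)))
     \<Rightarrow> ('k \<Rightarrow> nat \<Rightarrow> (('n \<times> 'm) \<Rightarrow> bool)) \<Rightarrow> nat
     \<Rightarrow> ((('n \<times> 'm) \<Rightarrow> bool) \<Rightarrow> (('n \<times> 'm) \<Rightarrow> bool)) set" where
  "Gamma_h g lam phi h = generate SymV {round_fun (g h) (lam h) (phi k h) | k. True}"

definition deriv_map :: "(('m \<Rightarrow> bool) \<Rightarrow> ('m \<Rightarrow> bool)) \<Rightarrow> ('m \<Rightarrow> bool) \<Rightarrow> ('m \<Rightarrow> bool) \<Rightarrow> ('m \<Rightarrow> bool)" where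
  "deriv_map f u x = vadd (f (vadd x u)) (f x)"

definition diff_uniform :: "nat \<Rightarrow> (('m::finite \<Rightarrow> bool) \<Rightarrow> ('m \<Rightarrow> bool)) \<Rightarrow> bool" where
  "diff_uniform \<delta> f \<longleftrightarrow> (\<forall>u v. u \<noteq> vzero \<longrightarrow> card {x. deriv_map f u x = v} \<le> \<delta>)"

definition weakly_uniform :: "nat \<Rightarrow> (('m::finite \<Rightarrow> bool) \<Rightarrow> ('m \<Rightarrow> bool)) \<Rightarrow> bool" where
  "weakly_uniform \<delta> f \<longleftrightarrow>
     (\<forall>u. u \<noteq> vzero \<longrightarrow> real (card (range (deriv_map f u))) > 2 ^ (CARD('m) - 1) / real \<delta>)"

definition strongly_anti_invariant :: "nat \<Rightarrow> (('m::finite \<Rightarrow> bool) \<Rightarrow> ('m \<Rightarrow> bool)) \<Rightarrow> bool" where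
  "strongly_anti_invariant s f \<longleftrightarrow>
     1 \<le> s \<and> s < CARD('m) \<and>
     (\<forall>U W. f2_subspace U \<longrightarrow> f2_subspace W \<longrightarrow> f ` U = W \<longrightarrow>
        (f2_dim U = f2_dim W \<and> f2_dim W < CARD('m) - s) \<or> (U = UNIV \<and> W = UNIV))"

definition transitive_on_UNIV :: "('a \<Rightarrow> 'a) set \<Rightarrow> bool" where
  "transitive_on_UNIV G \<longleftrightarrow> (\<forall>x y. \<exists>g\<in>G. g x = y)"

definition is_block :: "('a \<Rightarrow> 'a) set \<Rightarrow> 'a set \<Rightarrow> bool" where
  "is_block G B \<longleftrightarrow> B \<noteq> {} \<and> (\<forall>g\<in>G. g ` B = B \<or> g ` B \<inter> B = {})"

definition primitive :: "('a \<Rightarrow> 'a) set \<Rightarrow> bool" where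
  "primitive G \<longleftrightarrow> transitive_on_UNIV G \<and>
     (\<forall>B. is_block G B \<longrightarrow> card B = 1 \<or> B = UNIV)"

definition conj_by :: "('a \<Rightarrow> 'a) \<Rightarrow> ('a \<Rightarrow> 'a) \<Rightarrow> ('a \<Rightarrow> 'a)" where
  "conj_by g x = inv\<^bsub>SymV\<^esub> g \<otimes>\<^bsub>SymV\<^esub> x \<otimes>\<^bsub>SymV\<^esub> g"

text \<open>G = (S_1 x ... x S_c).O.P with T(V) = T_1 x ... x T_c (indices 0..c-1):
  the S_i are subgroups of G forming an internal direct product N, normal in G;
  each S_i is isomorphic to Alt(2^(d/c)) or Sym(2^(d/c)); T_i is an abelian subgroup
  of S_i of order 2^(d/c) and T(V) is their (direct) product; G permutes the S_i by
  conjugation, transitively (so P = G/K, K the kernel of this action, permutes the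
  S_i transitively and they are all conjugate); O = K/N is a subgroup of
  Out(S_1) x ... x Out(S_c), i.e. the natural map K/N -> prod Out(S_i) is injective.\<close>
definition wreath_structure :: "nat \<Rightarrow> ('a \<Rightarrow> 'a) set \<Rightarrow> ('a \<Rightarrow> 'a) set \<Rightarrow> bool" where
  "wreath_structure d Tr G \<longleftrightarrow>
    (\<exists>c S T.
       c > 1 \<and> c dvd d \<and>
       (\<forall>i<c. subgroup (S i) SymV \<and> S i \<subseteq> G) \<and>
       (\<forall>i<c. SymV\<lparr>carrier := S i\<rparr> \<cong> alt_group (2 ^ (d div c))
             \<or> SymV\<lparr>carrier := S i\<rparr> \<cong> sym_group (2 ^ (d div c))) \<and>
       (\<forall>i<c. \<forall>j<c. i \<noteq> j \<longrightarrow> (\<forall>x\<in>S i. \<forall>y\<in>S j. x \<otimes>\<^bsub>SymV\<^esub> y = y \<otimes>\<^bsub>SymV\<^esub> x)) \<and>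
       (\<forall>i<c. S i \<inter> generate SymV (\<Union>j\<in>{..<c} - {i}. S j) = {\<one>\<^bsub>SymV\<^esub>}) \<and>
       generate SymV (\<Union>i<c. S i) \<lhd> SymV\<lparr>carrier := G\<rparr> \<and>
       (\<forall>i<c. subgroup (T i) SymV \<and> T i \<subseteq> S i \<and>
              (\<forall>x\<in>T i. \<forall>y\<in>T i. x \<otimes>\<^bsub>SymV\<^esub> y = y \<otimes>\<^bsub>SymV\<^esub> x) \<and>
              card (T i) = 2 ^ (d div c)) \<and>
       Tr = generate SymV (\<Union>i<c. T i) \<and>
       (\<forall>g\<in>G. \<forall>i<c. \<exists>j<c. conj_by g ` S i = S j) \<and>
       (\<forall>i<c. \<forall>j<c. \<exists>g\<in>G. conj_by g ` S i = S j) \<and>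
       (\<forall>k\<in>G. (\<forall>i<c. conj_by k ` S i = S i) \<longrightarrow>
          (\<forall>i<c. \<exists>s\<in>S i. \<forall>x\<in>S i. conj_by k x = conj_by s x) \<longrightarrow>
          k \<in> generate SymV (\<Union>i<c. S i)))"

end

theory Submission
  imports Defs
begin

lemma carrier_SymV: "f \<in> carrier SymV \<longleftrightarrow> bij f"
  by (simp add: BijGroup_def Bij_def extensional_def)

lemma mult_SymV: "bij f \<Longrightarrow> bij g \<Longrightarrow> f \<otimes>\<^bsub>SymV\<^esub> g = f \<circ> g"
  unfolding BijGroup_def Bij_def extensional_def compose_def by (auto simp: fun_eq_iff)

lemma one_SymV: "\<one>\<^bsub>SymV\<^esub> = id"
  by (simp add: BijGroup_def fun_eq_iff)

lemma inv_SymV: "bij f \<Longrightarrow> m_inv SymV f = inv' f"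
  by (subst inv_BijGroup) (auto simp: Bij_def extensional_def fun_eq_iff)

lemma grp: "group SymV"
  by (rule group_BijGroup)


lemma vadd_comm: "vadd x y = vadd y x" by (auto simp: vadd_def fun_eq_iff)
lemma vadd_assoc: "vadd (vadd x y) z = vadd x (vadd y z)" by (auto simp: vadd_def fun_eq_iff)
lemma vadd_zero[simp]: "vadd x vzero = x" "vadd vzero x = x" by (auto simp: vadd_def vzero_def fun_eq_iff)
lemma vadd_self[simp]: "vadd x x = vzero" by (auto simp: vadd_def vzero_def fun_eq_iff)
lemma vadd_cancel[simp]: "vadd (vadd x y) y = x" "vadd x (vadd x y) = y"
  by (auto simp: vadd_def fun_eq_iff)
lemma vadd_cancel2[simp]: "vadd (vadd x y) x = y" "vadd y (vadd x y) = x"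
  by (auto simp: vadd_def fun_eq_iff)
lemma vadd_inj[simp]: "vadd x y = vadd x z \<longleftrightarrow> y = z" "vadd y x = vadd z x \<longleftrightarrow> y = z"
  by (auto simp: vadd_def fun_eq_iff)
lemma vadd_eq_zero: "vadd x y = vzero \<longleftrightarrow> x = y" by (auto simp: vadd_def vzero_def fun_eq_iff)

lemma transl_apply[simp]: "transl v x = vadd x v" by (simp add: transl_def)
lemma transl_zero[simp]: "transl vzero = id" by (simp add: transl_def fun_eq_iff)
lemma transl_bij: "bij (transl v)"
  by (rule o_bij[of "transl v"]) (auto simp: fun_eq_iff)
lemma transl_inv: "inv' (transl v) = transl v"
  by (rule inv_unique_comp) (auto simp: fun_eq_iff)
lemma inj_vadd: "inj_on (\<lambda>x. vadd x c) A" "inj_on (vadd c) A"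
  by (auto intro: inj_onI)
lemma card_vadd_img[simp]: "card ((\<lambda>x. vadd x c) ` A) = card A"
  by (rule card_image) (auto intro: inj_onI)
lemma card_transl: "card (transl c ` A) = card A"
  by (rule card_image) (auto intro: inj_onI)

lemma sub_zero: "f2_subspace U \<Longrightarrow> vzero \<in> U" by (simp add: f2_subspace_def)
lemma sub_add: "f2_subspace U \<Longrightarrow> x \<in> U \<Longrightarrow> y \<in> U \<Longrightarrow> vadd x y \<in> U"
  by (simp add: f2_subspace_def)

lemma sub_card_aux:
  fixes U :: "('a::finite \<Rightarrow> bool) set"
  assumes "finite A"
  shows "f2_subspace U \<Longrightarrow> (\<forall>x\<in>U. \<forall>b. b \<notin> A \<longrightarrow> \<not> x b) \<Longrightarrow> \<exists>k. card U = 2^k"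
  using assms
proof (induction A arbitrary: U rule: finite_induct)
  case empty
  then have "U = {vzero}" using sub_zero[OF empty(1)] by (auto simp: vzero_def fun_eq_iff)
  then show ?case by (intro exI[of _ 0]) simp
next
  case (insert a A)
  define U0 where "U0 = {x\<in>U. \<not> x a}"
  have s0: "f2_subspace U0" using insert.prems(1)
    by (auto simp: U0_def f2_subspace_def vzero_def vadd_def)
  have "\<forall>x\<in>U0. \<forall>b. b \<notin> A \<longrightarrow> \<not> x b" using insert.prems(2) by (auto simp: U0_def)
  from insert.IH[OF s0 this] obtain k where k: "card U0 = 2^k" by blast
  show ?case
  proof (cases "\<exists>w\<in>U. w a")
    case False
    then have "U = U0" by (auto simp: U0_def)
    then show ?thesis using k by blast
  next
    case True
    then obtain w where w: "w \<in> U" "w a" by blast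
    have eq: "U = U0 \<union> vadd w ` U0"
    proof
      show "U \<subseteq> U0 \<union> vadd w ` U0"
      proof
        fix x assume x: "x \<in> U"
        show "x \<in> U0 \<union> vadd w ` U0"
        proof (cases "x a")
          case True
          then have "vadd w x \<in> U0" using x w insert.prems(1)
            by (auto simp: U0_def vadd_def f2_subspace_def)
          then show ?thesis by (intro UnI2 image_eqI[of _ _ "vadd w x"]) auto
        qed (auto simp: U0_def x)
      qed
      show "U0 \<union> vadd w ` U0 \<subseteq> U" using w insert.prems(1)
        by (auto simp: U0_def f2_subspace_def)
    qed
    have disj: "U0 \<inter> vadd w ` U0 = {}" using w by (auto simp: U0_def vadd_def)
    have "card U = card U0 + card (vadd w ` U0)"
      unfolding eq by (rule card_Un_disjoint) (use disj in auto)
    also have "card (vadd w ` U0) = card U0" by (rule card_image) (rule inj_vadd)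
    finally have "card U = 2^(Suc k)" using k by simp
    then show ?thesis by blast
  qed
qed

lemma sub_card:
  fixes U :: "('a::finite \<Rightarrow> bool) set"
  assumes "f2_subspace U" shows "\<exists>k. card U = 2^k"
  using sub_card_aux[of UNIV U] assms by simp

lemma f2_dim_eq: "card U = 2^k \<Longrightarrow> f2_dim U = k"
  unfolding f2_dim_def by (rule the_equality) auto

lemma sub_union_coset:
  assumes "f2_subspace A" shows "f2_subspace (A \<union> transl c ` A)"
  unfolding f2_subspace_def
proof (intro conjI ballI)
  show "vzero \<in> A \<union> transl c ` A" using sub_zero[OF assms] by auto
  fix x y assume x: "x \<in> A \<union> transl c ` A" and y: "y \<in> A \<union> transl c ` A"
  have e1: "vadd (vadd a c) b = vadd (vadd a b) c" for a b
    by (metis vadd_assoc vadd_comm)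
  have e2: "vadd (vadd a c) (vadd b c) = vadd a b" for a b
    by (auto simp: vadd_def)
  have e3: "vadd a (vadd b c) = vadd (vadd a b) c" for a b
    by (metis vadd_assoc)
  from x y show "vadd x y \<in> A \<union> transl c ` A"
    using sub_add[OF assms] by (auto simp: e1 e2 e3)
qed


definition brk :: "('n \<times> 'm \<Rightarrow> bool) \<Rightarrow> 'n \<Rightarrow> ('m \<Rightarrow> bool)" where
  "brk v i = (\<lambda>j. v (i, j))"
definition emb :: "'n \<Rightarrow> ('m \<Rightarrow> bool) \<Rightarrow> ('n \<times> 'm \<Rightarrow> bool)" where
  "emb i x = (\<lambda>(k, j). k = i \<and> x j)"

lemma vec_eqI: "(\<And>i. brk u i = brk v i) \<Longrightarrow> u = v"
  by (auto simp: brk_def fun_eq_iff)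
lemma brk_bricklayer[simp]: "brk (bricklayer G v) i = G i (brk v i)"
  by (simp add: brk_def bricklayer_def)
lemma brk_vadd[simp]: "brk (vadd u v) i = vadd (brk u i) (brk v i)"
  by (simp add: brk_def vadd_def)
lemma brk_vzero[simp]: "brk vzero i = vzero"
  by (simp add: brk_def vzero_def)
lemma brk_emb[simp]: "brk (emb i x) k = (if k = i then x else vzero)"
  by (auto simp: brk_def emb_def vzero_def fun_eq_iff)
lemma emb_vadd: "emb i (vadd x y) = vadd (emb i x) (emb i y)"
  by (rule vec_eqI) auto
lemma emb_vzero[simp]: "emb i vzero = vzero"
  by (rule vec_eqI) auto
lemma emb_inj[simp]: "emb i x = emb i y \<longleftrightarrow> x = y"
  by (metis brk_emb)

lemma bricklayer_emb:
  assumes "\<forall>k. G k vzero = vzero"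
  shows "bricklayer G (emb i x) = emb i (G i x)"
  by (rule vec_eqI) (use assms in auto)

lemma bricklayer_zero:
  assumes "\<forall>k. G k vzero = vzero" shows "bricklayer G vzero = vzero"
  by (rule vec_eqI) (use assms in auto)

lemma bricklayer_inj:
  assumes "\<forall>k. inj (G k)" shows "inj (bricklayer G)"
proof (rule injI)
  fix x y assume "bricklayer G x = bricklayer G y"
  then have "G i (brk x i) = G i (brk y i)" for i by (metis brk_bricklayer)
  then show "x = y" using assms by (intro vec_eqI) (auto dest: injD)
qed

lemma bricklayer_bij:
  assumes "\<forall>k. bij (G k)" shows "bij (bricklayer G)"
proof (rule o_bij[of "bricklayer (\<lambda>k. inv' (G k))"])
  show "bricklayer (\<lambda>k. inv' (G k)) \<circ> bricklayer G = id"
    by (rule ext, rule vec_eqI) (use assms in \<open>auto simp: bij_def\<close>)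
  show "bricklayer G \<circ> bricklayer (\<lambda>k. inv' (G k)) = id"
    by (rule ext, rule vec_eqI) (use assms in \<open>auto simp: bij_def surj_f_inv_f\<close>)
qed

lemma bricklayer0_from:
  assumes "bricklayer G vzero = vzero" shows "\<forall>k. G k vzero = vzero"
  using arg_cong[OF assms, of "\<lambda>v. brk v k" for k] by simp

lemma brick_sum_bricklayer:
  fixes G :: "'n \<Rightarrow> ('m \<Rightarrow> bool) \<Rightarrow> ('m \<Rightarrow> bool)"
  assumes "\<forall>k. G k vzero = vzero" "\<forall>k. bij (G k)"
  shows "bricklayer G ` brick_sum I = brick_sum I"
proof -
  have sub: "bricklayer H ` brick_sum I \<subseteq> brick_sum I" if "\<forall>k. H k vzero = vzero" for H
  proof
    fix y assume "y \<in> bricklayer H ` brick_sum I"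
    then obtain v where v: "v \<in> brick_sum I" "y = bricklayer H v" by auto
    have "brk v i = vzero" if "i \<notin> I" for i using v(1) that
      by (auto simp: brick_sum_def brk_def vzero_def)
    then have "brk y i = vzero" if "i \<notin> I" for i using that v(2) \<open>\<forall>k. H k vzero = vzero\<close> by auto
    then show "y \<in> brick_sum I"
      by (auto simp: brick_sum_def brk_def vzero_def fun_eq_iff)
  qed
  have inv0: "\<forall>k. inv' (G k) vzero = vzero" using assms
    by (metis bij_inv_eq_iff)
  have "brick_sum I \<subseteq> bricklayer G ` brick_sum I"
  proof
    fix v :: "'n \<times> 'm \<Rightarrow> bool" assume v: "v \<in> brick_sum I"
    have "bricklayer (\<lambda>k. inv' (G k)) v \<in> brick_sum I" using sub[of "\<lambda>k. inv' (G k)", OF inv0] v by auto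
    moreover have "bricklayer G (bricklayer (\<lambda>k. inv' (G k)) v) = v"
      by (rule vec_eqI) (use assms in \<open>auto simp: bij_def surj_f_inv_f\<close>)
    ultimately show "v \<in> bricklayer G ` brick_sum I" by (metis image_eqI)
  qed
  then show ?thesis using sub[of G, OF assms(1)] by blast
qed


lemma card_UNIV_vec: "card (UNIV :: ('m::finite \<Rightarrow> bool) set) = 2 ^ CARD('m)"
  by (simp add: card_fun)

lemma fiber_bound:
  fixes F :: "('m::finite \<Rightarrow> bool) \<Rightarrow> ('m \<Rightarrow> bool)"
  assumes "\<forall>y. card {x. F x = y} \<le> K"
  shows "2 ^ CARD('m) \<le> card (range F) * K"
proof -
  have "(UNIV :: ('m \<Rightarrow> bool) set) = (\<Union>y\<in>range F. {x. F x = y})" by auto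
  then have "card (UNIV :: ('m \<Rightarrow> bool) set) \<le> (\<Sum>y\<in>range F. card {x. F x = y})"
    by (metis card_UN_le finite)
  also have "\<dots> \<le> card (range F) * K"
    using sum_bounded_above[of "range F" "\<lambda>y. card {x. F x = y}" K] assms by auto
  finally show ?thesis by (simp add: card_UNIV_vec)
qed

lemma key:
  fixes G :: "'n::finite \<Rightarrow> ('m::finite \<Rightarrow> bool) \<Rightarrow> ('m \<Rightarrow> bool)"
    and U W :: "('n \<times> 'm \<Rightarrow> bool) set"
  assumes bijG: "\<forall>i. bij (G i)" and G0: "\<forall>i. G i vzero = vzero"
    and bricks: "\<exists>r::nat.
        (1 < r \<and> r < CARD('m) \<and>
           (\<forall>i. diff_uniform (2 ^ r) (G i) \<and> strongly_anti_invariant (r - 1) (G i)))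
      \<or> (1 \<le> r \<and> r < CARD('m) \<and>
           (\<forall>i. weakly_uniform (2 ^ r) (G i) \<and> strongly_anti_invariant r (G i)))"
    and U: "f2_subspace U" and W: "f2_subspace W"
    and hyp: "\<forall>v. bricklayer G ` (transl v ` U) = transl (bricklayer G v) ` W"
  shows "U = brick_sum {i. \<exists>u\<in>U. brk u i \<noteq> vzero}"
proof -
  define \<gamma> where "\<gamma> = bricklayer G"
  have injG: "inj (G i)" for i using bijG bij_def by blast
  have \<gamma>0: "\<gamma> vzero = vzero" unfolding \<gamma>_def by (rule bricklayer_zero[of G, OF G0])
  have \<gamma>emb: "\<gamma> (emb i x) = emb i (G i x)" for i x unfolding \<gamma>_def by (rule bricklayer_emb[of G, OF G0])
  have D: "vadd (\<gamma> (vadd u v)) (\<gamma> v) \<in> W" if "u \<in> U" for u v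
  proof -
    have "\<gamma> (vadd u v) \<in> transl (\<gamma> v) ` W"
      using hyp[rule_format, of v] that unfolding \<gamma>_def by (metis image_eqI transl_apply)
    then obtain w where "w \<in> W" "\<gamma> (vadd u v) = vadd w (\<gamma> v)" by auto
    then show ?thesis by simp
  qed
  have imgU: "\<gamma> ` U = W" using hyp[rule_format, of vzero] \<gamma>0 unfolding \<gamma>_def by simp
  have full: "emb i x \<in> U" if u: "u \<in> U" "brk u i \<noteq> vzero" for i x u
  proof -
    define Ui where "Ui = {x. emb i x \<in> U}"
    define Wi where "Wi = {x. emb i x \<in> W}"
    have sUi: "f2_subspace Ui" using U unfolding Ui_def f2_subspace_def by (simp add: emb_vadd)
    have sWi: "f2_subspace Wi" using W unfolding Wi_def f2_subspace_def by (simp add: emb_vadd)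
    have GUi: "G i ` Ui = Wi"
    proof
      show "G i ` Ui \<subseteq> Wi" using imgU \<gamma>emb unfolding Ui_def Wi_def by (auto, metis image_eqI)
      show "Wi \<subseteq> G i ` Ui"
      proof
        fix y assume "y \<in> Wi"
        then have "emb i y \<in> \<gamma> ` U" using imgU by (simp add: Wi_def)
        then obtain u' where u': "u' \<in> U" "\<gamma> u' = emb i y" by auto
        have bk: "G k (brk u' k) = brk (emb i y) k" for k using u'(2) unfolding \<gamma>_def
          by (metis brk_bricklayer)
        have "brk u' k = vzero" if "k \<noteq> i" for k
          using bk[of k] that G0 injG[of k] by (metis brk_emb injD)
        then have "u' = emb i (brk u' i)" by (intro vec_eqI) auto
        moreover have "G i (brk u' i) = y" using bk[of i] by simp
        ultimately show "y \<in> G i ` Ui" using u'(1) unfolding Ui_def by (metis (mono_tags) image_eqI mem_Collect_eq)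
      qed
    qed
    have cardW: "card Wi = card Ui" unfolding GUi[symmetric] by (rule card_image) (meson injG inj_on_subset subset_UNIV)
    obtain k where k: "card Ui = 2 ^ k" using sub_card[OF sUi] by blast
    have dU: "f2_dim Ui = k" and dW: "f2_dim Wi = k" using k cardW by (auto intro: f2_dim_eq)
    define \<alpha> where "\<alpha> = brk u i"
    define F where "F = deriv_map (G i) \<alpha>"
    have FW: "vadd (F x) (F vzero) \<in> Wi" for x
    proof -
      have "vadd (vadd (\<gamma> (vadd u (emb i x))) (\<gamma> (emb i x))) (vadd (\<gamma> (vadd u vzero)) (\<gamma> vzero)) \<in> W"
        using D[OF u(1), of "emb i x"] D[OF u(1), of vzero] sub_add[OF W] by simp
      moreover have "vadd (vadd (\<gamma> (vadd u (emb i x))) (\<gamma> (emb i x))) (vadd (\<gamma> (vadd u vzero)) (\<gamma> vzero))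
          = emb i (vadd (F x) (F vzero))"
      proof (rule vec_eqI)
        fix k show "brk (vadd (vadd (\<gamma> (vadd u (emb i x))) (\<gamma> (emb i x))) (vadd (\<gamma> (vadd u vzero)) (\<gamma> vzero))) k
          = brk (emb i (vadd (F x) (F vzero))) k"
          using G0 by (cases "k = i") (simp_all add: \<gamma>_def F_def \<alpha>_def deriv_map_def vadd_comm)
      qed
      ultimately show ?thesis by (simp add: Wi_def)
    qed
    have rangeF: "range F \<subseteq> transl (F vzero) ` Wi"
    proof
      fix z assume "z \<in> range F"
      then obtain x where "z = F x" by auto
      then show "z \<in> transl (F vzero) ` Wi" using FW[of x]
        by (intro image_eqI[of _ _ "vadd z (F vzero)"]) auto
    qed
    have cardF: "card (range F) \<le> 2 ^ k"
      using card_mono[OF _ rangeF] card_transl[of "F vzero" Wi] cardW k by simp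
    from bricks obtain r where rr: "(1 < r \<and> r < CARD('m) \<and>
           (\<forall>i. diff_uniform (2 ^ r) (G i) \<and> strongly_anti_invariant (r - 1) (G i)))
      \<or> (1 \<le> r \<and> r < CARD('m) \<and>
           (\<forall>i. weakly_uniform (2 ^ r) (G i) \<and> strongly_anti_invariant r (G i)))" by blast
    have "Ui = UNIV"
    proof (cases "1 < r \<and> r < CARD('m) \<and>
           (\<forall>i. diff_uniform (2 ^ r) (G i) \<and> strongly_anti_invariant (r - 1) (G i))")
      case True
      then have r1: "1 < r" "r < CARD('m)" and du: "diff_uniform (2 ^ r) (G i)"
        and ai: "strongly_anti_invariant (r - 1) (G i)" by auto
      have "\<alpha> \<noteq> vzero" using u(2) by (simp add: \<alpha>_def)
      then have "\<forall>y. card {x. F x = y} \<le> 2 ^ r" using du by (simp add: diff_uniform_def F_def)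
      from fiber_bound[OF this] have "2 ^ CARD('m) \<le> card (range F) * 2 ^ r" .
      also have "\<dots> \<le> 2 ^ k * 2 ^ r" using cardF by simp
      finally have "(2::nat) ^ CARD('m) \<le> 2 ^ (k + r)" by (simp add: power_add)
      then have mk: "CARD('m) \<le> k + r" by simp
      have aiU: "k < CARD('m) - (r - 1) \<or> Ui = UNIV"
        using ai sUi sWi GUi dU dW unfolding strongly_anti_invariant_def by auto
      show "Ui = UNIV"
      proof (rule ccontr)
        assume nU: "Ui \<noteq> UNIV"
        then obtain v0 where v0: "v0 \<notin> Ui" by auto
        have coset: "vadd (G i (vadd \<beta> v)) (G i v) \<in> Wi" if "\<beta> \<in> Ui" for \<beta> v
        proof -
          have "vadd (\<gamma> (vadd (emb i \<beta>) (emb i v))) (\<gamma> (emb i v)) \<in> W"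
            using D that by (simp add: Ui_def)
          then show ?thesis by (simp add: Wi_def emb_vadd[symmetric] \<gamma>emb)
        qed
        define Xs where "Xs = Ui \<union> transl v0 ` Ui"
        define Ys where "Ys = Wi \<union> transl (G i v0) ` Wi"
        have sX: "f2_subspace Xs" unfolding Xs_def by (rule sub_union_coset[OF sUi])
        have sY: "f2_subspace Ys" unfolding Ys_def by (rule sub_union_coset[OF sWi])
        have sub1: "G i ` transl v0 ` Ui \<subseteq> transl (G i v0) ` Wi"
        proof
          fix z assume "z \<in> G i ` transl v0 ` Ui"
          then obtain \<beta> where b: "\<beta> \<in> Ui" "z = G i (vadd \<beta> v0)" by auto
          show "z \<in> transl (G i v0) ` Wi" using coset[OF b(1), of v0] b(2)
            by (intro image_eqI[of _ _ "vadd z (G i v0)"]) auto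
        qed
        have c1: "card (G i ` transl v0 ` Ui) = card Ui"
          by (metis card_image card_transl injG inj_on_subset subset_UNIV)
        have e1: "G i ` transl v0 ` Ui = transl (G i v0) ` Wi"
          by (rule card_subset_eq[OF _ sub1]) (use c1 cardW card_image[OF inj_vadd(1), of "G i v0" Wi] in auto)
        have GX: "G i ` Xs = Ys" unfolding Xs_def Ys_def using GUi e1 by (simp add: image_Un)
        have disj: "Ui \<inter> transl v0 ` Ui = {}"
        proof (rule ccontr)
          assume "Ui \<inter> transl v0 ` Ui \<noteq> {}"
          then obtain \<beta> where "\<beta> \<in> Ui" "vadd \<beta> v0 \<in> Ui" by auto
          then have "vadd \<beta> (vadd \<beta> v0) \<in> Ui" using sub_add[OF sUi] by blast
          then show False using v0 by simp
        qed
        have cX: "card Xs = 2 ^ (k + 1)" unfolding Xs_def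
          by (subst card_Un_disjoint) (use disj in \<open>simp_all add: card_transl k\<close>)
        have cY: "card Ys = 2 ^ (k + 1)" using cX GX
          by (metis card_image injG inj_on_subset subset_UNIV)
        have dX: "f2_dim Xs = k + 1" and dY: "f2_dim Ys = k + 1" using cX cY by (auto intro: f2_dim_eq)
        have "k + 1 < CARD('m) - (r - 1) \<or> Xs = UNIV"
          using ai sX sY GX dX dY unfolding strongly_anti_invariant_def by auto
        then show False
        proof
          assume "k + 1 < CARD('m) - (r - 1)" then show False using mk r1 by linarith
        next
          assume "Xs = UNIV"
          then have "(2::nat) ^ (k+1) = 2 ^ CARD('m)" using cX card_UNIV_vec by metis
          then have "k + 1 = CARD('m)" using power_inject_exp[of "2::nat" "k+1" "CARD('m)"] by linarith
          then show False using aiU nU r1 by linarith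
        qed
      qed
    next
      case False
      with rr have r1: "1 \<le> r" "r < CARD('m)" and wu: "weakly_uniform (2 ^ r) (G i)"
        and ai: "strongly_anti_invariant r (G i)" by auto
      have "\<alpha> \<noteq> vzero" using u(2) by (simp add: \<alpha>_def)
      then have "real (card (range F)) > 2 ^ (CARD('m) - 1) / 2 ^ r"
        using wu by (simp add: weakly_uniform_def F_def)
      then have "2 ^ (CARD('m) - 1) / 2 ^ r < real (2 ^ k)" using cardF
        by (meson le_less_trans of_nat_le_iff order_less_le_trans)
      then have "(2::real) ^ (CARD('m) - 1) < 2 ^ k * 2 ^ r" by (simp add: divide_less_eq)
      then have "(2::real) ^ (CARD('m) - 1) < 2 ^ (k + r)" by (simp add: power_add)
      then have "CARD('m) - 1 < k + r" by (metis power_strict_increasing_iff one_less_numeral_iff semiring_norm(76))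
      moreover have "k < CARD('m) - r \<or> Ui = UNIV"
        using ai sUi sWi GUi dU dW unfolding strongly_anti_invariant_def by auto
      ultimately show "Ui = UNIV" using r1 by linarith
    qed
    then show ?thesis by (simp add: Ui_def set_eq_iff)
  qed
  define I where "I = {i. \<exists>u\<in>U. brk u i \<noteq> vzero}"
  show ?thesis unfolding I_def[symmetric]
  proof
    show "U \<subseteq> brick_sum I"
    proof
      fix u assume "u \<in> U"
      then have "brk u i = vzero" if "i \<notin> I" for i using that by (auto simp: I_def)
      then show "u \<in> brick_sum I" by (auto simp: brick_sum_def brk_def vzero_def fun_eq_iff)
    qed
    show "brick_sum I \<subseteq> U"
    proof
      fix v :: "'n \<times> 'm \<Rightarrow> bool" assume v: "v \<in> brick_sum I"
      define restr where "restr J = (\<lambda>(i, j). i \<in> J \<and> v (i, j))" for J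
      have "finite J \<Longrightarrow> J \<subseteq> I \<Longrightarrow> restr J \<in> U" for J
      proof (induction J rule: finite_induct)
        case empty
        then show ?case using sub_zero[OF U] by (simp add: restr_def vzero_def)
      next
        case (insert i J)
        have "restr (insert i J) = vadd (restr J) (emb i (brk v i))"
          using insert.hyps(2) by (auto simp: restr_def vadd_def emb_def brk_def fun_eq_iff)
        moreover have "emb i (brk v i) \<in> U" using insert.prems full by (auto simp: I_def)
        ultimately show ?case using insert sub_add[OF U] by auto
      qed
      then have "restr I \<in> U" by simp
      moreover have "restr I = v" using v by (auto simp: restr_def brick_sum_def fun_eq_iff)
      ultimately show "v \<in> U" by simp
    qed
  qed
qed


lemma brick_sum_empty: "brick_sum {} = {vzero}"
  by (auto simp: brick_sum_def vzero_def fun_eq_iff)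
lemma brick_sum_UNIV: "brick_sum UNIV = UNIV"
  by (auto simp: brick_sum_def)

lemma lin_zero: "f2_linear f \<Longrightarrow> f vzero = vzero"
  unfolding f2_linear_def by (metis vadd_self)

locale setting =
  fixes g :: "nat \<Rightarrow> 'n::finite \<Rightarrow> ('m::finite \<Rightarrow> bool) \<Rightarrow> ('m \<Rightarrow> bool)"
    and lam :: "nat \<Rightarrow> ((('n \<times> 'm) \<Rightarrow> bool) \<Rightarrow> (('n \<times> 'm) \<Rightarrow> bool))"
    and phi :: "'k \<Rightarrow> nat \<Rightarrow> (('n \<times> 'm) \<Rightarrow> bool)"
    and h :: nat
  assumes bijG: "\<forall>i. bij (g h i)" and Gz: "bricklayer (g h) vzero = vzero"
    and GL: "in_GL (lam h)" and surjphi: "surj (\<lambda>k. phi k h)"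
    and spm: "strongly_proper_mixing (lam h)"
    and bricks: "\<exists>r::nat.
        (1 < r \<and> r < CARD('m) \<and>
           (\<forall>i. diff_uniform (2 ^ r) (g h i) \<and> strongly_anti_invariant (r - 1) (g h i)))
      \<or> (1 \<le> r \<and> r < CARD('m) \<and>
           (\<forall>i. weakly_uniform (2 ^ r) (g h i) \<and> strongly_anti_invariant r (g h i)))"
begin

definition "L0 = lam h \<circ> bricklayer (g h)"
abbreviation "\<Gamma> \<equiv> Gamma_h g lam phi h"

lemma G0: "\<forall>i. g h i vzero = vzero" using bricklayer0_from[OF Gz] .
lemma bijlam: "bij (lam h)" using GL by (simp add: in_GL_def)
lemma linlam: "lam h (vadd x y) = vadd (lam h x) (lam h y)"
  using GL by (simp add: in_GL_def f2_linear_def)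
lemma lam0: "lam h vzero = vzero" using GL lin_zero by (auto simp: in_GL_def)
lemma bijgam: "bij (bricklayer (g h))" using bricklayer_bij[OF bijG] .
lemma bijL0: "bij L0" unfolding L0_def using bijlam bijgam bij_comp by blast

lemma rf_eq: "round_fun (g h) (lam h) (phi k h) = transl (phi k h) \<circ> L0"
  by (simp add: round_fun_def L0_def comp_assoc)

lemma gens_carrier: "{round_fun (g h) (lam h) (phi k h) | k. True} \<subseteq> carrier SymV"
  using bijL0 transl_bij by (auto simp: rf_eq carrier_SymV intro!: bij_comp)

lemma subgrp: "subgroup \<Gamma> SymV"
  unfolding Gamma_h_def by (rule group.generate_is_subgroup[OF grp gens_carrier])

lemma mem_bij: "f \<in> \<Gamma> \<Longrightarrow> bij f"
  using subgroup.subset[OF subgrp] carrier_SymV by blast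

lemma comp_mem: "f \<in> \<Gamma> \<Longrightarrow> f' \<in> \<Gamma> \<Longrightarrow> f \<circ> f' \<in> \<Gamma>"
  using subgroup.m_closed[OF subgrp] mult_SymV mem_bij by metis

lemma inv_mem: "f \<in> \<Gamma> \<Longrightarrow> inv' f \<in> \<Gamma>"
  using subgroup.m_inv_closed[OF subgrp] inv_SymV mem_bij by metis

lemma rf_mem: "transl (phi k h) \<circ> L0 \<in> \<Gamma>"
  unfolding Gamma_h_def rf_eq[symmetric] by (rule generate.incl) blast

lemma L0_mem: "L0 \<in> \<Gamma>"
proof -
  obtain k where "phi k h = vzero" using surjphi by (metis surjD)
  then show ?thesis using rf_mem[of k] by simp
qed

lemma transl_mem: "transl v \<in> \<Gamma>"
proof -
  obtain k where k: "phi k h = v" using surjphi by (metis surjD)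
  have "(transl v \<circ> L0) \<circ> inv' L0 \<in> \<Gamma>" using rf_mem[of k] k inv_mem[OF L0_mem] comp_mem by simp
  moreover have "L0 \<circ> inv' L0 = id" using bijL0
    by (intro ext) (simp add: bij_is_surj surj_f_inv_f)
  then have "(transl v \<circ> L0) \<circ> inv' L0 = transl v" by (simp add: comp_assoc)
  ultimately show ?thesis by simp
qed

lemma L0_apply: "L0 x = lam h (bricklayer (g h) x)" by (simp add: L0_def)

lemma struct:
  assumes U: "f2_subspace U" and U': "f2_subspace U'"
    and hyp: "\<forall>v. L0 ` (transl v ` U) = transl (L0 v) ` U'"
  shows "\<exists>I. U = brick_sum I \<and> lam h ` U = U'"
proof -
  define \<gamma> where "\<gamma> = bricklayer (g h)"
  define P where "P = {w. lam h w \<in> U'}"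
  have injlam: "inj (lam h)" using bijlam bij_def by blast
  have sP: "f2_subspace P" using U' unfolding P_def f2_subspace_def by (simp add: linlam lam0)
  have hyp2: "\<forall>v. \<gamma> ` (transl v ` U) = transl (\<gamma> v) ` P"
  proof
    fix v
    show "\<gamma> ` (transl v ` U) = transl (\<gamma> v) ` P"
    proof
      show "\<gamma> ` transl v ` U \<subseteq> transl (\<gamma> v) ` P"
      proof
        fix z assume "z \<in> \<gamma> ` transl v ` U"
        then obtain x where x: "x \<in> U" "z = \<gamma> (vadd x v)" by auto
        have "L0 (vadd x v) \<in> L0 ` transl v ` U" using x(1) by auto
        then have "L0 (vadd x v) \<in> transl (L0 v) ` U'" using hyp[rule_format, of v] by simp
        then obtain u' where u': "u' \<in> U'" "lam h z = vadd u' (lam h (\<gamma> v))"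
          using x(2) by (auto simp: L0_apply \<gamma>_def)
        have "lam h (vadd z (\<gamma> v)) = u'" using u'(2) by (simp add: linlam)
        then have "vadd z (\<gamma> v) \<in> P" using u'(1) by (simp add: P_def)
        then show "z \<in> transl (\<gamma> v) ` P" by (intro image_eqI[of _ _ "vadd z (\<gamma> v)"]) auto
      qed
      show "transl (\<gamma> v) ` P \<subseteq> \<gamma> ` transl v ` U"
      proof
        fix z assume "z \<in> transl (\<gamma> v) ` P"
        then obtain w where w: "lam h w \<in> U'" "z = vadd w (\<gamma> v)" by (auto simp: P_def)
        have "lam h z \<in> transl (L0 v) ` U'" using w by (auto simp: linlam L0_apply \<gamma>_def)
        then have "lam h z \<in> L0 ` transl v ` U" using hyp[rule_format, of v] by simp
        then obtain x where x: "x \<in> U" "lam h z = L0 (vadd x v)" by auto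
        then have "z = \<gamma> (vadd x v)" using injlam by (auto simp: L0_apply \<gamma>_def dest: injD)
        then show "z \<in> \<gamma> ` transl v ` U" using x(1) by auto
      qed
    qed
  qed
  have "U = brick_sum {i. \<exists>u\<in>U. brk u i \<noteq> vzero}"
    by (rule key[OF bijG G0 bricks U sP]) (use hyp2 in \<open>simp add: \<gamma>_def\<close>)
  then obtain I where I: "U = brick_sum I" by blast
  have "\<gamma> ` U = P" using hyp2[rule_format, of vzero] Gz by (simp add: \<gamma>_def)
  moreover have "\<gamma> ` U = U" unfolding I \<gamma>_def by (rule brick_sum_bricklayer[OF G0 bijG])
  ultimately have PU: "P = U" by simp
  have sub: "lam h ` U \<subseteq> U'" using PU by (auto simp: P_def)
  have "L0 ` U = U'" using hyp[rule_format, of vzero] by (simp add: L0_apply Gz lam0)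
  then have "card U' = card U" using bijL0 by (metis bij_betw_imp_inj_on card_image inj_on_subset subset_UNIV)
  moreover have "card (lam h ` U) = card U" using injlam by (meson card_image inj_on_subset subset_UNIV)
  ultimately have "lam h ` U = U'" using sub by (metis card_subset_eq finite)
  then show ?thesis using I by blast
qed

lemma wall_contra: "U = brick_sum I \<Longrightarrow> I \<noteq> {} \<Longrightarrow> I \<noteq> UNIV \<Longrightarrow> lam h ` U = U'
   \<Longrightarrow> U' = brick_sum I' \<Longrightarrow> I' \<noteq> {} \<Longrightarrow> I' \<noteq> UNIV \<Longrightarrow> False"
  using spm unfolding strongly_proper_mixing_def wall_def by blast

lemma primitive: "primitive \<Gamma>"
  unfolding primitive_def
proof (intro conjI allI impI)
  show "transitive_on_UNIV \<Gamma>" unfolding transitive_on_UNIV_def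
  proof (intro allI)
    fix x y :: "'n \<times> 'm \<Rightarrow> bool"
    show "\<exists>f\<in>\<Gamma>. f x = y" using transl_mem[of "vadd x y"] by (intro bexI) auto
  qed
next
  fix B :: "('n \<times> 'm \<Rightarrow> bool) set" assume blk: "is_block \<Gamma> B"
  then obtain b where b: "b \<in> B" by (auto simp: is_block_def)
  define U where "U = transl b ` B"
  have tt: "transl b ` transl b ` A = A" for A by (force simp: image_image)
  have BU: "B = transl b ` U" unfolding U_def by (simp add: image_image)
  have blockU: "f ` U = U \<or> f ` U \<inter> U = {}" if f: "f \<in> \<Gamma>" for f
  proof -
    define f' where "f' = transl b \<circ> f \<circ> transl b"
    have "f' \<in> \<Gamma>" unfolding f'_def using f transl_mem comp_mem by blast
    then have "f' ` B = B \<or> f' ` B \<inter> B = {}" using blk by (auto simp: is_block_def)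
    moreover have "f' ` B = transl b ` (f ` U)" by (simp add: f'_def U_def image_comp)
    moreover have "inj (transl b)" using transl_bij bij_def by blast
    ultimately show ?thesis unfolding BU
      by (metis image_Int image_empty inj_image_eq_iff tt)
  qed
  have U0: "vzero \<in> U" unfolding U_def using b by (intro image_eqI[of _ _ b]) auto
  have sU: "f2_subspace U" unfolding f2_subspace_def
  proof (intro conjI ballI)
    show "vzero \<in> U" by (rule U0)
    fix x y assume x: "x \<in> U" and y: "y \<in> U"
    have xin: "x \<in> transl x ` U \<inter> U" using x U0 by (auto intro: image_eqI[of _ _ vzero])
    have "transl x ` U = U \<or> transl x ` U \<inter> U = {}" by (rule blockU[OF transl_mem])
    then have "transl x ` U = U" using xin by (metis empty_iff)
    moreover have "transl x y \<in> transl x ` U" using y by (rule imageI)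
    ultimately have "vadd y x \<in> U" by simp
    then show "vadd x y \<in> U" by (simp add: vadd_comm)
  qed
  have hyp: "\<forall>v. L0 ` (transl v ` U) = transl (L0 v) ` U"
  proof
    fix v
    define f where "f = transl (L0 v) \<circ> L0 \<circ> transl v"
    have fm: "f \<in> \<Gamma>" unfolding f_def using transl_mem L0_mem comp_mem by blast
    have "f vzero = vzero" by (simp add: f_def)
    then have zin: "vzero \<in> f ` U \<inter> U" using U0 by (auto intro: image_eqI[of _ _ vzero])
    have "f ` U = U \<or> f ` U \<inter> U = {}" by (rule blockU[OF fm])
    then have fU: "f ` U = U" using zin by (metis empty_iff)
    have "transl (L0 v) ` f ` U = L0 ` transl v ` U" by (simp add: f_def image_comp comp_def)
    then show "L0 ` (transl v ` U) = transl (L0 v) ` U" using fU by simp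
  qed
  obtain I where I: "U = brick_sum I" "lam h ` U = U" using struct[OF sU sU hyp] by blast
  have "I = {} \<or> I = UNIV" using wall_contra[OF I(1) _ _ I(2) I(1)] by blast
  then show "card B = 1 \<or> B = UNIV"
  proof
    assume "I = {}"
    then have "U = {vzero}" using I by (simp add: brick_sum_empty)
    then show ?thesis using BU by simp
  next
    assume "I = UNIV"
    then have "U = UNIV" using I by (simp add: brick_sum_UNIV)
    then have "B = range (transl b)" using BU by simp
    then show ?thesis using transl_bij[of b] by (simp add: bij_def)
  qed
qed

end

lemma three_div:
  fixes s :: "'a \<Rightarrow> 'a"
  assumes "finite A" "s ` A \<subseteq> A" "\<forall>x\<in>A. s x \<noteq> x" "\<forall>x\<in>A. s (s (s x)) = x"
  shows "3 dvd card A"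
  using assms
proof (induction "card A" arbitrary: A rule: less_induct)
  case less
  show ?case
  proof (cases "A = {}")
    case True then show ?thesis by simp
  next
    case False
    then obtain x where x: "x \<in> A" by auto
    define B where "B = {x, s x, s (s x)}"
    have BA: "B \<subseteq> A" using x less.prems(2) by (auto simp: B_def)
    have d1: "s x \<noteq> x" using x less.prems(3) by auto
    have sxA: "s x \<in> A" using x less.prems(2) by auto
    have d2: "s (s x) \<noteq> s x" using sxA less.prems(3) by auto
    have d3: "s (s x) \<noteq> x"
    proof
      assume e: "s (s x) = x"
      then have "s x = s (s (s x))" by simp
      also have "\<dots> = x" using x less.prems(4) by auto
      finally show False using d1 by simp
    qed
    have cB: "card B = 3" using d1 d2 d3 by (auto simp: B_def card_insert_if)
    have inj: "s y = s z \<Longrightarrow> y \<in> A \<Longrightarrow> z \<in> A \<Longrightarrow> y = z" for y z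
      using less.prems(4) by metis
    have cl: "s ` (A - B) \<subseteq> A - B"
    proof
      fix z assume "z \<in> s ` (A - B)"
      then obtain y where y: "y \<in> A" "y \<notin> B" "z = s y" by auto
      have zA: "z \<in> A" using y less.prems(2) by auto
      have "z \<noteq> x"
      proof
        assume "z = x"
        then have "s (s z) = s (s x)" by simp
        then have "y = s (s x)" using y less.prems(4) by auto
        then show False using y(2) by (simp add: B_def)
      qed
      moreover have "z \<noteq> s x" using inj[of y x] y x by (auto simp: B_def)
      moreover have "z \<noteq> s (s x)" using inj[of y "s x"] y sxA by (auto simp: B_def)
      ultimately show "z \<in> A - B" using zA by (simp add: B_def)
    qed
    have ge3: "card A \<ge> 3" using cB BA less.prems(1) by (metis card_mono)
    have "card (A - B) < card A" using cB BA less.prems(1) ge3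
      by (simp add: card_Diff_subset finite_subset)
    then have "3 dvd card (A - B)"
      using less.hyps[of "A - B"] less.prems cl by auto
    moreover have "card (A - B) = card A - 3" using cB BA less.prems(1)
      by (simp add: card_Diff_subset finite_subset)
    moreover note ge3
    ultimately show ?thesis by (metis dvd_diffD dvd_refl)
  qed
qed

lemma iso_card:
  assumes "is_iso G Xg" shows "card (carrier G) = card (carrier Xg)"
  using assms unfolding is_iso_def iso_def by (auto simp: bij_betw_same_card)

lemma iso_elem3:
  fixes H :: "('v \<Rightarrow> 'v) set" and Xg :: "(nat \<Rightarrow> nat) monoid" and c3 :: "nat \<Rightarrow> nat"
  assumes iso: "is_iso (SymV\<lparr>carrier := H\<rparr>) Xg" and sg: "subgroup H SymV"
    and mX: "monoid.mult Xg = (\<circ>)" and c3: "c3 \<in> carrier Xg"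
    and c3o: "c3 \<circ> c3 \<circ> c3 = id" and c3n: "c3 \<noteq> id"
    and bX: "\<forall>p\<in>carrier Xg. bij p"
  shows "\<exists>s\<in>H. s \<circ> s \<circ> s = id \<and> s \<noteq> id"
proof -
  obtain \<phi> where \<phi>: "\<phi> \<in> hom (SymV\<lparr>carrier := H\<rparr>) Xg" "bij_betw \<phi> H (carrier Xg)"
    using iso unfolding is_iso_def iso_def by auto
  have Hb: "x \<in> H \<Longrightarrow> bij x" for x using subgroup.subset[OF sg] carrier_SymV by blast
  have mul: "x \<in> H \<Longrightarrow> y \<in> H \<Longrightarrow> \<phi> (x \<circ> y) = \<phi> x \<circ> \<phi> y" for x y
  proof -
    assume x: "x \<in> H" and y: "y \<in> H"
    have "\<phi> (x \<otimes>\<^bsub>SymV\<lparr>carrier := H\<rparr>\<^esub> y) = \<phi> x \<otimes>\<^bsub>Xg\<^esub> \<phi> y"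
      using \<phi>(1) x y unfolding hom_def by simp
    then show ?thesis using mX mult_SymV[OF Hb[OF x] Hb[OF y]] by simp
  qed
  have cl: "x \<in> H \<Longrightarrow> y \<in> H \<Longrightarrow> x \<circ> y \<in> H" for x y
    using subgroup.m_closed[OF sg] Hb mult_SymV by metis
  have idH: "id \<in> H" using subgroup.one_closed[OF sg] one_SymV by metis
  have E: "\<phi> id = \<phi> id \<circ> \<phi> id" using mul[OF idH idH] by simp
  have "\<phi> id \<in> carrier Xg" using bij_betwE[OF \<phi>(2)] idH by blast
  then have b: "bij (\<phi> id)" using bX by blast
  have iv: "inv' (\<phi> id) \<circ> \<phi> id = id" by (rule inv_o_cancel[OF bij_is_inj[OF b]])
  have "\<phi> id = (inv' (\<phi> id) \<circ> \<phi> id) \<circ> \<phi> id" unfolding iv by simp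
  also have "\<dots> = inv' (\<phi> id) \<circ> (\<phi> id \<circ> \<phi> id)" by (simp only: o_assoc)
  also have "\<dots> = inv' (\<phi> id) \<circ> \<phi> id" by (subst E[symmetric]) (rule refl)
  also have "\<dots> = id" by (rule iv)
  finally have phid: "\<phi> id = id" .
  obtain s where s: "s \<in> H" "\<phi> s = c3" using \<phi>(2) c3 by (metis bij_betw_imp_surj_on imageE)
  have s3: "s \<circ> s \<circ> s \<in> H" using cl s(1) by blast
  have "\<phi> (s \<circ> s \<circ> s) = id" using mul s cl c3o by simp
  then have "s \<circ> s \<circ> s = id" using \<phi>(2) phid s3 idH
    by (metis bij_betw_imp_inj_on inj_onD)
  moreover have "s \<noteq> id" using s c3n phid by auto
  ultimately show ?thesis using s(1) by blast
qed

definition "c3 = cycle_of_list [1::nat, 2, 3]"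

lemma c3_mem: "3 \<le> n \<Longrightarrow> c3 \<in> carrier (alt_group n)"
  using three_cycles_incl[of n] unfolding c3_def
  by (rule subsetD) (intro CollectI exI[of _ "[1,2,3]"], auto)

lemma c3_ord: "c3 \<circ> c3 \<circ> c3 = id"
  by (auto simp: c3_def fun_eq_iff transpose_def)

lemma c3_nid: "c3 \<noteq> id"
proof
  assume "c3 = id"
  then have "c3 3 = 3" by simp
  then show False by (simp add: c3_def transpose_def)
qed


lemma not3dvd: "\<not> 3 dvd (2::nat) ^ n"
proof (induction n)
  case (Suc n)
  then show ?case by (simp, presburger)
qed simp

locale wr = setting g lam phi h for g :: "nat \<Rightarrow> 'n::finite \<Rightarrow> ('m::finite \<Rightarrow> bool) \<Rightarrow> ('m \<Rightarrow> bool)"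
    and lam :: "nat \<Rightarrow> ((('n \<times> 'm) \<Rightarrow> bool) \<Rightarrow> (('n \<times> 'm) \<Rightarrow> bool))"
    and phi :: "'k \<Rightarrow> nat \<Rightarrow> (('n \<times> 'm) \<Rightarrow> bool)" and h +
  fixes c :: nat and S T :: "nat \<Rightarrow> ((('n \<times> 'm) \<Rightarrow> bool) \<Rightarrow> (('n \<times> 'm) \<Rightarrow> bool)) set"
  assumes c1: "c > 1"
    and cd: "c dvd CARD('n) * CARD('m)"
    and Ssub: "\<forall>i<c. subgroup (S i) SymV \<and> S i \<subseteq> Gamma_h g lam phi h"
    and Siso: "\<forall>i<c. is_iso (SymV\<lparr>carrier := S i\<rparr>) (alt_group (2 ^ (CARD('n) * CARD('m) div c)))
             \<or> is_iso (SymV\<lparr>carrier := S i\<rparr>) (sym_group (2 ^ (CARD('n) * CARD('m) div c)))"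
    and Scomm: "\<forall>i<c. \<forall>j<c. i \<noteq> j \<longrightarrow> (\<forall>x\<in>S i. \<forall>y\<in>S j. x \<otimes>\<^bsub>SymV\<^esub> y = y \<otimes>\<^bsub>SymV\<^esub> x)"
    and Sind: "\<forall>i<c. S i \<inter> generate SymV (\<Union>j\<in>{..<c} - {i}. S j) = {\<one>\<^bsub>SymV\<^esub>}"
    and Tprop: "\<forall>i<c. subgroup (T i) SymV \<and> T i \<subseteq> S i \<and> card (T i) = 2 ^ (CARD('n) * CARD('m) div c)"
    and Tgen: "transl_group = generate SymV (\<Union>i<c. T i)"
    and Sconj: "\<forall>g\<in>Gamma_h g lam phi h. \<forall>i<c. \<exists>j<c. conj_by g ` S i = S j"
begin


lemma a_pos: "(1::nat) \<le> (CARD('n) * CARD('m) div c)"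
proof -
  have "CARD('n) * CARD('m) > 0" by simp
  show ?thesis
  proof (rule ccontr)
    assume "\<not> (1::nat) \<le> CARD('n) * CARD('m) div c"
    then have "CARD('n) * CARD('m) div c = 0" by simp
    then have "CARD('n) * CARD('m) = 0" using dvd_mult_div_cancel[OF cd] by simp
    then show False using \<open>CARD('n) * CARD('m) > 0\<close> by simp
  qed
qed

lemma Sb: "i < c \<Longrightarrow> s \<in> S i \<Longrightarrow> bij s"
  using Ssub subgroup.subset carrier_SymV by blast

lemma Scomm': "i < c \<Longrightarrow> j < c \<Longrightarrow> i \<noteq> j \<Longrightarrow> s \<in> S i \<Longrightarrow> t \<in> S j \<Longrightarrow> s \<circ> t = t \<circ> s"
  using Scomm Sb mult_SymV by metis

lemma Sinv: "i < c \<Longrightarrow> s \<in> S i \<Longrightarrow> inv' s \<in> S i"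
  using Ssub subgroup.m_inv_closed inv_SymV Sb by metis

lemma Tsub: "i < c \<Longrightarrow> T i \<subseteq> S i" using Tprop by blast

lemma cardT: "i < c \<Longrightarrow> card (T i) = 2 ^ (CARD('n) * CARD('m) div c)" using Tprop by blast

lemma T_transl: "i < c \<Longrightarrow> t \<in> T i \<Longrightarrow> t \<in> transl_group"
  unfolding Tgen by (rule generate.incl) blast

lemma transl_group_eq: "t \<in> transl_group \<longleftrightarrow> (\<exists>u. t = transl u)"
  by (auto simp: transl_group_def)

lemma T_nontriv: "i < c \<Longrightarrow> \<exists>u. u \<noteq> vzero \<and> transl u \<in> T i"
proof (rule ccontr)
  assume i: "i < c" and "\<not> (\<exists>u. u \<noteq> vzero \<and> transl u \<in> T i)"
  then have "T i \<subseteq> {id}"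
  proof (intro subsetI)
    fix t assume nt: "\<not> (\<exists>u. u \<noteq> vzero \<and> transl u \<in> T i)" and t: "t \<in> T i"
    obtain u where u: "t = transl u" using T_transl[OF i t] transl_group_eq by blast
    then have "u = vzero" using nt t by blast
    then show "t \<in> {id}" using u by simp
  qed
  then have "card (T i) \<le> 1" using card_mono[of "{id}" "T i"] by simp
  moreover have "(2::nat) ^ 1 \<le> 2 ^ (CARD('n) * CARD('m) div c)"
    using a_pos by (rule power_increasing) simp
  ultimately show False using cardT[OF i] by simp
qed

definition R :: "nat \<Rightarrow> (('n \<times> 'm \<Rightarrow> bool) \<times> ('n \<times> 'm \<Rightarrow> bool)) set" where
  "R i = {(x, s x) | x s j. j < c \<and> j \<noteq> i \<and> s \<in> S j}"

definition Orb :: "nat \<Rightarrow> ('n \<times> 'm \<Rightarrow> bool) set" where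
  "Orb i = {y. (vzero, y) \<in> (R i)\<^sup>*}"

lemma pres: assumes j: "j < c" "s \<in> S j" and i: "i < c"
  shows "(x, y) \<in> (R i)\<^sup>* \<Longrightarrow> (s x, s y) \<in> (R i)\<^sup>*"
proof (cases "j = i")
  case True
  assume "(x, y) \<in> (R i)\<^sup>*"
  then show ?thesis
  proof (induction rule: rtrancl_induct)
    case base then show ?case by simp
  next
    case (step y z)
    then obtain t j' where t: "z = t y" "j' < c" "j' \<noteq> i" "t \<in> S j'" by (auto simp: R_def)
    have "s z = t (s y)" using Scomm'[OF i t(2) _ _ t(4), of s] t(1,3) j True
      by (metis comp_apply)
    then have "(s y, s z) \<in> R i" using t by (auto simp: R_def)
    then show ?case using step.IH by (meson rtrancl_into_rtrancl)
  qed
next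
  case False
  assume xy: "(x, y) \<in> (R i)\<^sup>*"
  have b: "bij s" using Sb j by blast
  have "(s x, inv' s (s x)) \<in> R i" using Sinv[OF j] False j by (auto simp: R_def)
  then have "(s x, x) \<in> R i" using b by (simp add: bij_is_inj)
  moreover have "(y, s y) \<in> R i" using j False by (auto simp: R_def)
  ultimately show ?thesis using xy by (meson converse_rtrancl_into_rtrancl rtrancl_into_rtrancl)
qed

lemma gen_bij: "t \<in> generate SymV (\<Union>i<c. T i) \<Longrightarrow> bij t"
proof -
  have "(\<Union>i<c. T i) \<subseteq> carrier SymV" using Tprop subgroup.subset by blast
  then show "t \<in> generate SymV (\<Union>i<c. T i) \<Longrightarrow> bij t"
    using group.generate_in_carrier[OF grp] carrier_SymV by blast
qed

lemma gen_pres: assumes i: "i < c"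
  shows "t \<in> generate SymV (\<Union>i<c. T i) \<Longrightarrow> (x, y) \<in> (R i)\<^sup>* \<Longrightarrow> (t x, t y) \<in> (R i)\<^sup>*"
proof (induction arbitrary: x y rule: generate.induct)
  case one then show ?case by (simp add: one_SymV)
next
  case (incl h)
  then obtain j where "j < c" "h \<in> T j" by auto
  then show ?case using pres Tsub i incl.prems by blast
next
  case (inv h)
  then obtain j where j: "j < c" "h \<in> T j" by auto
  then have "h \<in> S j" using Tsub by blast
  then have "m_inv SymV h = inv' h" "inv' h \<in> S j" using Sb Sinv j by (auto simp: inv_SymV)
  then show ?case using pres j i inv.prems by metis
next
  case (eng h1 h2)
  have "h1 \<otimes>\<^bsub>SymV\<^esub> h2 = h1 \<circ> h2" using gen_bij eng.hyps mult_SymV by blast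
  then show ?case using eng.IH eng.prems by simp
qed

lemma transl_pres: "i < c \<Longrightarrow> (x, y) \<in> (R i)\<^sup>* \<Longrightarrow> (vadd x v, vadd y v) \<in> (R i)\<^sup>*"
  using gen_pres[of i "transl v"] Tgen by (simp add: transl_group_def)

lemma O_char: "i < c \<Longrightarrow> (x, y) \<in> (R i)\<^sup>* \<longleftrightarrow> vadd y x \<in> Orb i"
  unfolding Orb_def using transl_pres[of i x y x] transl_pres[of i vzero "vadd y x" x] by auto

lemma O_img: "i < c \<Longrightarrow> transl v ` Orb i = {y. (v, y) \<in> (R i)\<^sup>*}"
proof -
  assume i: "i < c"
  show ?thesis
  proof
    show "transl v ` Orb i \<subseteq> {y. (v, y) \<in> (R i)\<^sup>*}"
      using O_char[OF i] by (auto simp: vadd_assoc vadd_comm)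
    show "{y. (v, y) \<in> (R i)\<^sup>*} \<subseteq> transl v ` Orb i"
    proof
      fix y assume "y \<in> {y. (v, y) \<in> (R i)\<^sup>*}"
      then have "vadd y v \<in> Orb i" using O_char[OF i] by auto
      then show "y \<in> transl v ` Orb i" by (intro image_eqI[of _ _ "vadd y v"]) auto
    qed
  qed
qed

lemma O_sub: "i < c \<Longrightarrow> f2_subspace (Orb i)"
  unfolding f2_subspace_def
proof (intro conjI ballI)
  assume i: "i < c"
  show "vzero \<in> Orb i" by (simp add: Orb_def)
  fix x y assume x: "x \<in> Orb i" and y: "y \<in> Orb i"
  have "(vzero, x) \<in> (R i)\<^sup>*" "(vzero, y) \<in> (R i)\<^sup>*" using x y by (auto simp: Orb_def)
  then have "(x, vadd y x) \<in> (R i)\<^sup>*" using transl_pres[OF i, of vzero y x] by simp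
  then have "(vzero, vadd y x) \<in> (R i)\<^sup>*" using \<open>(vzero, x) \<in> (R i)\<^sup>*\<close> by simp
  then show "vadd x y \<in> Orb i" by (simp add: Orb_def vadd_comm)
qed

lemma O_nonzero: "i < c \<Longrightarrow> \<exists>u\<in>Orb i. u \<noteq> vzero"
proof -
  assume i: "i < c"
  define k :: nat where "k = (if i = 0 then 1 else 0)"
  have k: "k < c" "k \<noteq> i" using c1 by (auto simp: k_def)
  obtain u where u: "u \<noteq> vzero" "transl u \<in> T k" using T_nontriv[OF k(1)] by blast
  then have "transl u \<in> S k" using Tsub k by blast
  then have "(vzero, transl u vzero) \<in> R i" unfolding R_def using k by blast
  then have "u \<in> Orb i" by (auto simp: Orb_def)
  then show ?thesis using u by blast
qed

end

context wr begin

definition cj :: "(('n \<times> 'm \<Rightarrow> bool) \<Rightarrow> ('n \<times> 'm \<Rightarrow> bool)) \<Rightarrow> (('n \<times> 'm \<Rightarrow> bool) \<Rightarrow> ('n \<times> 'm \<Rightarrow> bool))"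
  where "cj s = L0 \<circ> s \<circ> inv' L0"

lemma injL0: "inj L0" using bijL0 bij_is_inj by blast
lemma L0_inv_apply[simp]: "inv' L0 (L0 x) = x" using injL0 by simp
lemma L0_apply_inv[simp]: "L0 (inv' L0 x) = x" using bijL0 by (simp add: bij_is_surj surj_f_inv_f)

lemma conj_eq: "bij s \<Longrightarrow> conj_by (inv' L0) s = cj s"
proof -
  assume s: "bij s"
  have b1: "bij (inv' L0)" using bijL0 by (rule bij_imp_bij_inv)
  have "m_inv SymV (inv' L0) = inv' (inv' L0)" using b1 by (rule inv_SymV)
  also have "\<dots> = L0" using bijL0 by (rule inv_inv_eq)
  finally have e: "m_inv SymV (inv' L0) = L0" .
  have "L0 \<otimes>\<^bsub>SymV\<^esub> s = L0 \<circ> s" using bijL0 s by (rule mult_SymV)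
  moreover have "bij (L0 \<circ> s)" using bijL0 s bij_comp by blast
  ultimately have "(L0 \<otimes>\<^bsub>SymV\<^esub> s) \<otimes>\<^bsub>SymV\<^esub> inv' L0 = L0 \<circ> s \<circ> inv' L0"
    using b1 mult_SymV by metis
  then show ?thesis unfolding conj_by_def e cj_def .
qed

lemma uncj: "inv' L0 \<circ> cj s \<circ> L0 = s"
  by (simp add: cj_def fun_eq_iff)

lemma cj_apply: "cj t (L0 y) = L0 (t y)" by (simp add: cj_def)

lemma rho_ex: "\<exists>\<rho>. \<forall>j<c. \<rho> j < c \<and> cj ` S j = S (\<rho> j)"
proof -
  have "inv' L0 \<in> \<Gamma>" using inv_mem[OF L0_mem] .
  then have "\<forall>i<c. \<exists>j<c. conj_by (inv' L0) ` S i = S j" using Sconj by blast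
  moreover have "i < c \<Longrightarrow> conj_by (inv' L0) ` S i = cj ` S i" for i
    using conj_eq Sb by (auto intro!: image_cong)
  ultimately have "\<forall>i. \<exists>j. i < c \<longrightarrow> j < c \<and> cj ` S i = S j" by metis
  then show ?thesis by metis
qed

lemma S_distinct: assumes "j < c" "k < c" "S j = S k" shows "j = k"
proof (rule ccontr)
  assume jk: "j \<noteq> k"
  have "S j \<subseteq> generate SymV (\<Union>l\<in>{..<c} - {k}. S l)"
    using assms(1) jk by (auto intro: generate.incl)
  then have "S k \<subseteq> {\<one>\<^bsub>SymV\<^esub>}" using Sind assms by blast
  then have "T k \<subseteq> {id}" using Tsub[OF assms(2)] one_SymV by auto
  then have "card (T k) \<le> 1" using card_mono[of "{id}" "T k"] by simp
  moreover obtain u where "u \<noteq> vzero" "transl u \<in> T k" using T_nontriv[OF assms(2)] by blast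
  moreover have "transl u \<noteq> id"
  proof
    assume "transl u = id"
    then have "transl u vzero = vzero" by simp
    then show False using \<open>u \<noteq> vzero\<close> by simp
  qed
  ultimately show False using \<open>T k \<subseteq> {id}\<close> by blast
qed

end

locale wr2 = wr +
  fixes \<rho> :: "nat \<Rightarrow> nat"
  assumes rho: "\<forall>j<c. \<rho> j < c \<and> cj ` S j = S (\<rho> j)"
begin

lemma rho_lt: "j < c \<Longrightarrow> \<rho> j < c" using rho by blast
lemma rho_S: "j < c \<Longrightarrow> cj ` S j = S (\<rho> j)" using rho by blast

lemma rho_inj: "inj_on \<rho> {..<c}"
proof (rule inj_onI)
  fix j k assume j: "j \<in> {..<c}" and k: "k \<in> {..<c}" and e: "\<rho> j = \<rho> k"
  have un: "(\<lambda>t. inv' L0 \<circ> t \<circ> L0) ` cj ` A = A" for A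
    by (simp add: image_image uncj)
  have "cj ` S j = cj ` S k" using rho_S j k e by simp
  then have "S j = S k" using un by metis
  then show "j = k" using S_distinct j k by blast
qed

lemma rho_surj: "\<rho> ` {..<c} = {..<c}"
  using endo_inj_surj[of "{..<c}" \<rho>] rho_inj rho_lt by auto

lemma forward: assumes i: "i < c" shows "(x, y) \<in> (R i)\<^sup>* \<Longrightarrow> (L0 x, L0 y) \<in> (R (\<rho> i))\<^sup>*"
proof -
  assume "(x, y) \<in> (R i)\<^sup>*"
  then show ?thesis
  proof (induction rule: rtrancl_induct)
    case base then show ?case by simp
  next
    case (step y z)
    then obtain t j where t: "z = t y" "j < c" "j \<noteq> i" "t \<in> S j" by (auto simp: R_def)
    have "cj t \<in> S (\<rho> j)" using rho_S[OF t(2)] t(4) by blast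
    moreover have "\<rho> j \<noteq> \<rho> i" using rho_inj t(2,3) i by (auto dest: inj_onD)
    ultimately have "(L0 y, cj t (L0 y)) \<in> R (\<rho> i)" using rho_lt[OF t(2)] unfolding R_def by blast
    then have "(L0 y, L0 z) \<in> R (\<rho> i)" using t(1) by (simp add: cj_apply)
    then show ?case using step.IH by (meson rtrancl_into_rtrancl)
  qed
qed

lemma backward: assumes i: "i < c" shows "(x, y) \<in> (R (\<rho> i))\<^sup>* \<Longrightarrow> (inv' L0 x, inv' L0 y) \<in> (R i)\<^sup>*"
proof -
  assume "(x, y) \<in> (R (\<rho> i))\<^sup>*"
  then show ?thesis
  proof (induction rule: rtrancl_induct)
    case base then show ?case by simp
  next
    case (step y z)
    then obtain t' j' where t: "z = t' y" "j' < c" "j' \<noteq> \<rho> i" "t' \<in> S j'" by (auto simp: R_def)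
    obtain j where j: "j < c" "j' = \<rho> j" using rho_surj t(2) by (metis imageE lessThan_iff)
    have ji: "j \<noteq> i" using j t(3) by blast
    obtain t where tt: "t \<in> S j" "t' = cj t" using rho_S[OF j(1)] t(4) j(2) by blast
    have "inv' L0 z = t (inv' L0 y)" using t(1) tt(2) by (simp add: cj_def)
    moreover have "(inv' L0 y, t (inv' L0 y)) \<in> R i" using tt(1) j(1) ji unfolding R_def by blast
    ultimately show ?case using step.IH by (metis rtrancl_into_rtrancl)
  qed
qed

lemma hyp: "i < c \<Longrightarrow> \<forall>v. L0 ` (transl v ` Orb i) = transl (L0 v) ` Orb (\<rho> i)"
proof
  fix v assume i: "i < c"
  have ri: "\<rho> i < c" using rho_lt[OF i] .
  show "L0 ` (transl v ` Orb i) = transl (L0 v) ` Orb (\<rho> i)"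
    unfolding O_img[OF i] O_img[OF ri]
  proof
    show "L0 ` {y. (v, y) \<in> (R i)\<^sup>*} \<subseteq> {y. (L0 v, y) \<in> (R (\<rho> i))\<^sup>*}"
      using forward[OF i] by blast
    show "{y. (L0 v, y) \<in> (R (\<rho> i))\<^sup>*} \<subseteq> L0 ` {y. (v, y) \<in> (R i)\<^sup>*}"
    proof
      fix z assume "z \<in> {y. (L0 v, y) \<in> (R (\<rho> i))\<^sup>*}"
      then have "(inv' L0 (L0 v), inv' L0 z) \<in> (R i)\<^sup>*" using backward[OF i] by blast
      then have "(v, inv' L0 z) \<in> (R i)\<^sup>*" by simp
      then show "z \<in> L0 ` {y. (v, y) \<in> (R i)\<^sup>*}" by (intro image_eqI[of _ _ "inv' L0 z"]) auto
    qed
  qed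
qed

lemma Orb_struct: "i < c \<Longrightarrow> \<exists>I. Orb i = brick_sum I \<and> I \<noteq> {} \<and> lam h ` Orb i = Orb (\<rho> i)"
proof -
  assume i: "i < c"
  obtain I where I: "Orb i = brick_sum I" "lam h ` Orb i = Orb (\<rho> i)"
    using struct[OF O_sub[OF i] O_sub[OF rho_lt[OF i]] hyp[OF i]] by blast
  moreover have "I \<noteq> {}"
  proof
    assume "I = {}"
    then have "Orb i = {vzero}" using I by (simp add: brick_sum_empty)
    then show False using O_nonzero[OF i] by auto
  qed
  ultimately show ?thesis by blast
qed

lemma Orb0: "Orb 0 = UNIV"
proof -
  have c0: "0 < c" using c1 by simp
  obtain I where I: "Orb 0 = brick_sum I" "I \<noteq> {}" "lam h ` Orb 0 = Orb (\<rho> 0)"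
    using Orb_struct[OF c0] by blast
  obtain I' where I': "Orb (\<rho> 0) = brick_sum I'" "I' \<noteq> {}"
    using Orb_struct[OF rho_lt[OF c0]] by blast
  show ?thesis
  proof (cases "I = UNIV")
    case True then show ?thesis using I by (simp add: brick_sum_UNIV)
  next
    case False
    show ?thesis
    proof (cases "I' = UNIV")
      case True
      then have "lam h ` Orb 0 = UNIV" using I I' by (simp add: brick_sum_UNIV)
      have "x \<in> Orb 0" for x
      proof -
        have "lam h x \<in> lam h ` Orb 0" using \<open>lam h ` Orb 0 = UNIV\<close> by simp
        then obtain y where "y \<in> Orb 0" "lam h x = lam h y" by auto
        then show ?thesis using bijlam by (metis bij_is_inj inj_eq)
      qed
      then show ?thesis by blast
    next
      case False
      then show ?thesis using wall_contra[OF I(1) I(2) \<open>I \<noteq> UNIV\<close> I(3) I'(1) I'(2)] by blast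
    qed
  qed
qed

end

context wr2 begin

lemma trans0: "(x, y) \<in> (R 0)\<^sup>*"
  using O_char[of 0 x y] c1 Orb0 by simp

lemma fixfree: assumes s: "s \<in> S 0" and x: "s x = x" shows "s = id"
proof
  fix y
  have c0: "0 < c" using c1 by simp
  have "(x, y) \<in> (R 0)\<^sup>*" by (rule trans0)
  then have "s y = y"
  proof (induction rule: rtrancl_induct)
    case base then show ?case by (rule x)
  next
    case (step y z)
    then obtain t j where t: "z = t y" "j < c" "j \<noteq> 0" "t \<in> S j" by (auto simp: R_def)
    have "s \<circ> t = t \<circ> s" using Scomm'[OF c0 t(2) _ s t(4)] t(3) by simp
    then have "s (t y) = t (s y)" by (metis comp_apply)
    then show ?case using step.IH t(1) by simp
  qed
  then show "s y = id y" by simp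
qed

lemma t1: "is_iso (SymV\<lparr>carrier := S 0\<rparr>) (alt_group n)
  \<Longrightarrow> subgroup (S 0) SymV \<Longrightarrow> 3 \<le> n \<Longrightarrow> (\<forall>p\<in>carrier (alt_group n). bij p) \<Longrightarrow> \<exists>s\<in>S 0. s \<circ> s \<circ> s = id \<and> s \<noteq> id"
  apply (rule iso_elem3)
  apply assumption+
  apply (rule alt_group_mult)
  apply (erule c3_mem)
  apply (rule c3_ord)
  apply (rule c3_nid)
  apply assumption
  done

lemma t2: "is_iso (SymV\<lparr>carrier := S 0\<rparr>) (sym_group n)
  \<Longrightarrow> subgroup (S 0) SymV \<Longrightarrow> c3 \<in> carrier (sym_group n) \<Longrightarrow> (\<forall>p\<in>carrier (sym_group n). bij p) \<Longrightarrow> \<exists>s\<in>S 0. s \<circ> s \<circ> s = id \<and> s \<noteq> id"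
  apply (rule iso_elem3)
  apply assumption+
  apply (rule sym_group_mult)
  apply assumption
  apply (rule c3_ord)
  apply (rule c3_nid)
  apply assumption
  done

lemma case_big_n:
  assumes n3: "3 \<le> n"
    and isos: "is_iso (SymV\<lparr>carrier := S 0\<rparr>) (alt_group n) \<or> is_iso (SymV\<lparr>carrier := S 0\<rparr>) (sym_group n)"
  shows False
proof -
  have c0: "0 < c" using c1 by simp
  have sg: "subgroup (S 0) SymV" using Ssub c0 by blast
  have bA: "\<forall>p\<in>carrier (alt_group n). bij p"
  proof
    fix p assume "p \<in> carrier (alt_group n)"
    then have "p permutes {1..n}" by (simp add: alt_group_carrier)
    then show "bij p" by (rule permutes_bij)
  qed
  have bS: "\<forall>p\<in>carrier (sym_group n). bij p"
  proof
    fix p assume "p \<in> carrier (sym_group n)"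
    then have "p permutes {1..n}" by (simp add: sym_group_carrier)
    then show "bij p" by (rule permutes_bij)
  qed
  have c3S: "c3 \<in> carrier (sym_group n)" using c3_mem[OF n3] by (simp add: alt_group_carrier sym_group_carrier)
  obtain s where s: "s \<in> S 0" "s \<circ> s \<circ> s = id" "s \<noteq> id"
    using isos t1[OF _ sg n3 bA] t2[OF _ sg c3S bS] by blast
  have ff: "\<forall>x. s x \<noteq> x" using fixfree[OF s(1)] s(3) by blast
  have "\<forall>x. s (s (s x)) = x" using s(2) by (metis comp_apply id_apply)
  then have "3 dvd card (UNIV :: ('a \<times> 'b \<Rightarrow> bool) set)"
    using three_div[of UNIV s] ff by simp
  then show False using card_UNIV_vec not3dvd by metis
qed

lemma case_big: assumes a2: "2 \<le> CARD('a) * CARD('b) div c" shows False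
proof -
  have "(2::nat) ^ 2 \<le> 2 ^ (CARD('a) * CARD('b) div c)" using a2 by (rule power_increasing) simp
  then have n3: "3 \<le> (2::nat) ^ (CARD('a) * CARD('b) div c)" by simp
  have c0: "0 < c" using c1 by simp
  show False by (rule case_big_n[OF n3]) (use Siso c0 in blast)
qed

lemma case_one: assumes a1: "CARD('a) * CARD('b) div c = 1" shows False
proof -
  have c0: "0 < c" using c1 by simp
  have ST: "S j = T j" if j: "j < c" for j
  proof -
    have cT: "card (T j) = 2" using cardT[OF j] a1 by simp
    have fin: "finite (S j)" by simp
    have "card (S j) = card (carrier (alt_group 2)) \<or> card (S j) = card (carrier (sym_group 2))"
      using Siso j a1 iso_card by fastforce
    moreover have "card (carrier (alt_group 2)) = 1"
      using alt_group_card_carrier[of 2] by simp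
    moreover have "card (carrier (sym_group 2)) = 2" by (simp add: sym_group_card_carrier)
    moreover have "card (T j) \<le> card (S j)" using Tsub[OF j] fin by (rule card_mono[rotated])
    ultimately have "card (S j) = 2" using cT by auto
    then show ?thesis using Tsub[OF j] cT fin by (metis card_subset_eq)
  qed
  define Gn where "Gn = generate SymV (\<Union>j\<in>{..<c} - {0}. S j)"
  have path: "(vzero, y) \<in> (R 0)\<^sup>* \<Longrightarrow> transl y \<in> Gn" for y
  proof (induction rule: rtrancl_induct)
    case base
    have "\<one>\<^bsub>SymV\<^esub> \<in> Gn" unfolding Gn_def by (rule generate.one)
    then show ?case by (simp add: one_SymV id_def)
  next
    case (step y z)
    then obtain s j where t: "z = s y" "j < c" "j \<noteq> 0" "s \<in> S j" by (auto simp: R_def)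
    have "s \<in> T j" using ST t(2,4) by simp
    then obtain w where w: "s = transl w" using T_transl[OF t(2)] transl_group_eq by blast
    have sG: "s \<in> Gn" unfolding Gn_def using t(2,3,4) by (auto intro: generate.incl)
    have "s \<otimes>\<^bsub>SymV\<^esub> transl y \<in> Gn" unfolding Gn_def
      using sG step.IH unfolding Gn_def by (rule generate.eng)
    moreover have "s \<otimes>\<^bsub>SymV\<^esub> transl y = s \<circ> transl y" using w transl_bij mult_SymV by metis
    moreover have "z = vadd y w" using w t(1) by simp
    then have "s \<circ> transl y = transl z" using w by (simp add: comp_def vadd_assoc transl_def)
    ultimately show ?case by metis
  qed
  obtain u where u: "u \<noteq> vzero" "transl u \<in> T 0" using T_nontriv[OF c0] by blast
  have "transl u \<in> Gn" using path trans0 by blast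
  moreover have "transl u \<in> S 0" using u Tsub[OF c0] by blast
  ultimately have "transl u \<in> {\<one>\<^bsub>SymV\<^esub>}" using Sind c0 unfolding Gn_def by blast
  then have "transl u = id" by (simp add: one_SymV)
  then have "transl u vzero = vzero" by simp
  then show False using u(1) by simp
qed

lemma wr2_False: False
  using case_one case_big a_pos by linarith

end

context wr begin
lemma wr_False: False
proof -
  obtain \<rho> where "\<forall>j<c. \<rho> j < c \<and> cj ` S j = S (\<rho> j)" using rho_ex by blast
  then interpret wr2 g lam phi h c S T \<rho> by unfold_locales
  show False by (rule wr2_False)
qed
end

context setting begin
lemma not_wreath: "\<not> wreath_structure (CARD('n) * CARD('m)) transl_group \<Gamma>"
proof
  assume W: "wreath_structure (CARD('n) * CARD('m)) transl_group \<Gamma>"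
  obtain c S T where H: "c > 1 \<and> c dvd (CARD('n) * CARD('m)) \<and>
       (\<forall>i<c. subgroup (S i) SymV \<and> S i \<subseteq> \<Gamma>) \<and>
       (\<forall>i<c. SymV\<lparr>carrier := S i\<rparr> \<cong> alt_group (2 ^ ((CARD('n) * CARD('m)) div c))
             \<or> SymV\<lparr>carrier := S i\<rparr> \<cong> sym_group (2 ^ ((CARD('n) * CARD('m)) div c))) \<and>
       (\<forall>i<c. \<forall>j<c. i \<noteq> j \<longrightarrow> (\<forall>x\<in>S i. \<forall>y\<in>S j. x \<otimes>\<^bsub>SymV\<^esub> y = y \<otimes>\<^bsub>SymV\<^esub> x)) \<and>
       (\<forall>i<c. S i \<inter> generate SymV (\<Union>j\<in>{..<c} - {i}. S j) = {\<one>\<^bsub>SymV\<^esub>}) \<and>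
       generate SymV (\<Union>i<c. S i) \<lhd> SymV\<lparr>carrier := \<Gamma>\<rparr> \<and>
       (\<forall>i<c. subgroup (T i) SymV \<and> T i \<subseteq> S i \<and>
              (\<forall>x\<in>T i. \<forall>y\<in>T i. x \<otimes>\<^bsub>SymV\<^esub> y = y \<otimes>\<^bsub>SymV\<^esub> x) \<and>
              card (T i) = 2 ^ ((CARD('n) * CARD('m)) div c)) \<and>
       transl_group = generate SymV (\<Union>i<c. T i) \<and>
       (\<forall>g\<in>\<Gamma>. \<forall>i<c. \<exists>j<c. conj_by g ` S i = S j) \<and>
       (\<forall>i<c. \<forall>j<c. \<exists>g\<in>\<Gamma>. conj_by g ` S i = S j) \<and>
       (\<forall>k\<in>\<Gamma>. (\<forall>i<c. conj_by k ` S i = S i) \<longrightarrow>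
          (\<forall>i<c. \<exists>s\<in>S i. \<forall>x\<in>S i. conj_by k x = conj_by s x) \<longrightarrow>
          k \<in> generate SymV (\<Union>i<c. S i))"
    using W unfolding wreath_structure_def by (elim exE) (rule that)
  have wr: "wr g lam phi h c S T"
  proof (rule wr.intro)
    show "setting g lam phi h" by unfold_locales
    show "wr_axioms g lam phi h c S T"
    proof (rule wr_axioms.intro)
      show "c > 1" by (rule H[THEN conjunct1])
      show "c dvd CARD('n) * CARD('m)" by (rule H[THEN conjunct2, THEN conjunct1])
      show "\<forall>i<c. subgroup (S i) SymV \<and> S i \<subseteq> \<Gamma>" by (rule H[THEN conjunct2, THEN conjunct2, THEN conjunct1])
      show "\<forall>i<c. is_iso (SymV\<lparr>carrier := S i\<rparr>) (alt_group (2 ^ (CARD('n) * CARD('m) div c)))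
             \<or> is_iso (SymV\<lparr>carrier := S i\<rparr>) (sym_group (2 ^ (CARD('n) * CARD('m) div c)))"
        using H[THEN conjunct2, THEN conjunct2, THEN conjunct2, THEN conjunct1] by (simp add: is_iso_def)
      show "\<forall>i<c. \<forall>j<c. i \<noteq> j \<longrightarrow> (\<forall>x\<in>S i. \<forall>y\<in>S j. x \<otimes>\<^bsub>SymV\<^esub> y = y \<otimes>\<^bsub>SymV\<^esub> x)"
        by (rule H[THEN conjunct2, THEN conjunct2, THEN conjunct2, THEN conjunct2, THEN conjunct1])
      show "\<forall>i<c. S i \<inter> generate SymV (\<Union>j\<in>{..<c} - {i}. S j) = {\<one>\<^bsub>SymV\<^esub>}" by (rule H[THEN conjunct2, THEN conjunct2, THEN conjunct2, THEN conjunct2, THEN conjunct2, THEN conjunct1])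
      have "\<forall>i<c. subgroup (T i) SymV \<and> T i \<subseteq> S i \<and>
              (\<forall>x\<in>T i. \<forall>y\<in>T i. x \<otimes>\<^bsub>SymV\<^esub> y = y \<otimes>\<^bsub>SymV\<^esub> x) \<and>
              card (T i) = 2 ^ ((CARD('n) * CARD('m)) div c)" by (rule H[THEN conjunct2, THEN conjunct2, THEN conjunct2, THEN conjunct2, THEN conjunct2, THEN conjunct2, THEN conjunct2, THEN conjunct1])
      then show "\<forall>i<c. subgroup (T i) SymV \<and> T i \<subseteq> S i \<and> card (T i) = 2 ^ (CARD('n) * CARD('m) div c)"
        by blast
      show "transl_group = generate SymV (\<Union>i<c. T i)" by (rule H[THEN conjunct2, THEN conjunct2, THEN conjunct2, THEN conjunct2, THEN conjunct2, THEN conjunct2, THEN conjunct2, THEN conjunct2, THEN conjunct1])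
      show "\<forall>g\<in>\<Gamma>. \<forall>i<c. \<exists>j<c. conj_by g ` S i = S j" by (rule H[THEN conjunct2, THEN conjunct2, THEN conjunct2, THEN conjunct2, THEN conjunct2, THEN conjunct2, THEN conjunct2, THEN conjunct2, THEN conjunct2, THEN conjunct1])
    qed
  qed
  show False by (rule wr.wr_False[OF wr])
qed
end


theorem proposition4p4:
  fixes l h :: nat
    and g :: "nat \<Rightarrow> 'n::finite \<Rightarrow> ('m::finite \<Rightarrow> bool) \<Rightarrow> ('m \<Rightarrow> bool)"
    and lam :: "nat \<Rightarrow> ((('n \<times> 'm) \<Rightarrow> bool) \<Rightarrow> (('n \<times> 'm) \<Rightarrow> bool))"
    and phi :: "'k \<Rightarrow> nat \<Rightarrow> (('n \<times> 'm) \<Rightarrow> bool)"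
  assumes m_gt: "CARD('m) > 1" and n_gt: "CARD('n) > 1"
    and cipher: "tb_cipher l g lam phi"
    and h_in: "h \<in> {1..l}"
    and strong: "strongly_proper_round lam phi h"
    and bricks: "\<exists>r::nat.
        (1 < r \<and> r < CARD('m) \<and>
           (\<forall>i. diff_uniform (2 ^ r) (g h i) \<and> strongly_anti_invariant (r - 1) (g h i)))
      \<or> (1 \<le> r \<and> r < CARD('m) \<and>
           (\<forall>i. weakly_uniform (2 ^ r) (g h i) \<and> strongly_anti_invariant r (g h i)))"
  shows "primitive (Gamma_h g lam phi h) \<and>
         \<not> wreath_structure (CARD('n) * CARD('m)) transl_group (Gamma_h g lam phi h)"
proof -
  have hc: "(\<forall>i. bij (g h i)) \<and> bricklayer (g h) vzero = vzero \<and> in_GL (lam h)"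
    using cipher h_in unfolding tb_cipher_def by blast
  have pr: "proper_mixing (lam h)" "surj (\<lambda>k. phi k h)" "strongly_proper_mixing (lam h)"
    using strong unfolding strongly_proper_round_def proper_round_def by blast+
  interpret S: setting g lam phi h
    by unfold_locales (use hc pr bricks in blast)+
  show ?thesis using S.primitive S.not_wreath by blast
qed

end
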